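(* Let $\Gamma$ be a countable discrete group and $\mu$ a symmetric, generating probability measure on $\Gamma$. Assume there is a nonzero $f\in\ell^\infty(\Gamma)$ with $f*\mu=-f$. Then there exists a multiplicative character $\chi:\Gamma\to\mathbb T$ with $\chi(h)=-1$ for all $h\in\operatorname{supp}(\mu)$, hence $\chi*\mu=-\chi$. Moreover, for every $F\in\ell^\infty(\Gamma)$ with $F*\mu=-F$ there exists $f_1\in\ell^\infty(\Gamma)$ with $f_1*\mu=f_1$ such that $F=f_1\cdot\chi$ (pointwise product).
   Context: $(f*\mu)(x)=\sum_{h\in\Gamma}\mu(h)f(xh)$. $\mu$ symmetric: $\mu(g)=\mu(g^{-1})$; generating: its support generates $\Gamma$ as a group. *)

theory Defs
  imports "HOL-Analysis.Analysis" "HOL-Algebra.Generated_Groups"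
begin

definition conv_meas :: "('a, 'b) monoid_scheme \<Rightarrow> ('a \<Rightarrow> complex) \<Rightarrow> ('a \<Rightarrow> real) \<Rightarrow> 'a \<Rightarrow> complex" where
  "conv_meas G f \<mu> x = (\<Sum>\<^sub>\<infinity>h\<in>carrier G. complex_of_real (\<mu> h) * f (x \<otimes>\<^bsub>G\<^esub> h))"

definition supp_meas :: "('a, 'b) monoid_scheme \<Rightarrow> ('a \<Rightarrow> real) \<Rightarrow> 'a set" where
  "supp_meas G \<mu> = {h \<in> carrier G. \<mu> h \<noteq> 0}"

definition prob_meas :: "('a, 'b) monoid_scheme \<Rightarrow> ('a \<Rightarrow> real) \<Rightarrow> bool" where
  "prob_meas G \<mu> \<longleftrightarrow> (\<forall>h\<in>carrier G. 0 \<le> \<mu> h) \<and> (\<mu> has_sum 1) (carrier G)"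

definition symmetric_meas :: "('a, 'b) monoid_scheme \<Rightarrow> ('a \<Rightarrow> real) \<Rightarrow> bool" where
  "symmetric_meas G \<mu> \<longleftrightarrow> (\<forall>g\<in>carrier G. \<mu> g = \<mu> (inv\<^bsub>G\<^esub> g))"

definition generating_meas :: "('a, 'b) monoid_scheme \<Rightarrow> ('a \<Rightarrow> real) \<Rightarrow> bool" where
  "generating_meas G \<mu> \<longleftrightarrow> generate G (supp_meas G \<mu>) = carrier G"

definition linf :: "('a, 'b) monoid_scheme \<Rightarrow> ('a \<Rightarrow> complex) \<Rightarrow> bool" where
  "linf G f \<longleftrightarrow> (\<exists>B. \<forall>x\<in>carrier G. norm (f x) \<le> B)"

definition unitary_character :: "('a, 'b) monoid_scheme \<Rightarrow> ('a \<Rightarrow> complex) \<Rightarrow> bool" where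
  "unitary_character G chi \<longleftrightarrow> (\<forall>x\<in>carrier G. norm (chi x) = 1) \<and>
     (\<forall>x\<in>carrier G. \<forall>y\<in>carrier G. chi (x \<otimes>\<^bsub>G\<^esub> y) = chi x * chi y)"

end

theory Submission
  imports Defs
begin

inductive par :: "('a, 'b) monoid_scheme \<Rightarrow> 'a set \<Rightarrow> 'a \<Rightarrow> bool \<Rightarrow> bool"
  for G S where
  par_one: "par G S \<one>\<^bsub>G\<^esub> True"
| par_step: "par G S g b \<Longrightarrow> s \<in> S \<Longrightarrow> par G S (g \<otimes>\<^bsub>G\<^esub> s) (\<not> b)"

lemma par_carrier:
  assumes "group G" "S \<subseteq> carrier G" "par G S g b"
  shows "g \<in> carrier G"
  using assms(3) proof induction
  case par_one then show ?case using assms(1) group.is_monoid monoid.one_closed by blast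
next
  case (par_step g b s) then show ?case using assms(1,2) by (meson group.is_monoid monoid.m_closed subsetD)
qed

lemma par_mult:
  assumes "group G" "S \<subseteq> carrier G" "par G S x b" "par G S y c"
  shows "par G S (x \<otimes>\<^bsub>G\<^esub> y) (b = c)"
  using assms(4) proof induction
  case par_one
  have "x \<otimes>\<^bsub>G\<^esub> \<one>\<^bsub>G\<^esub> = x" using par_carrier[OF assms(1,2,3)] assms(1)
    by (simp add: group.is_monoid monoid.r_one)
  then show ?case using assms(3) by simp
next
  case (par_step g c s)
  have "x \<otimes>\<^bsub>G\<^esub> (g \<otimes>\<^bsub>G\<^esub> s) = (x \<otimes>\<^bsub>G\<^esub> g) \<otimes>\<^bsub>G\<^esub> s"
    using par_carrier[OF assms(1,2,3)] par_carrier[OF assms(1,2) par_step(1)] par_step(2) assms(1,2)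
    by (metis group.is_monoid monoid.m_assoc subsetD)
  moreover have "par G S ((x \<otimes>\<^bsub>G\<^esub> g) \<otimes>\<^bsub>G\<^esub> s) (\<not> (b = c))"
    using par.par_step[OF par_step(3) par_step(2)] .
  ultimately show ?case by (metis (full_types))
qed

lemma generate_par:
  assumes "group G" "S \<subseteq> carrier G" "\<And>s. s \<in> S \<Longrightarrow> inv\<^bsub>G\<^esub> s \<in> S"
    and "g \<in> generate G S"
  shows "\<exists>b. par G S g b"
  using assms(4) proof induction
  case one then show ?case using par_one by blast
next
  case (incl h)
  have "par G S (\<one>\<^bsub>G\<^esub> \<otimes>\<^bsub>G\<^esub> h) False" using par_step[OF par_one incl] by simp
  moreover have "\<one>\<^bsub>G\<^esub> \<otimes>\<^bsub>G\<^esub> h = h" using incl assms(1,2) by (meson group.is_monoid monoid.l_one subsetD)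
  ultimately show ?case by metis
next
  case (inv h)
  have "par G S (\<one>\<^bsub>G\<^esub> \<otimes>\<^bsub>G\<^esub> inv\<^bsub>G\<^esub> h) False" using par_step[OF par_one assms(3)[OF inv]] by simp
  moreover have "\<one>\<^bsub>G\<^esub> \<otimes>\<^bsub>G\<^esub> inv\<^bsub>G\<^esub> h = inv\<^bsub>G\<^esub> h" using inv assms(1,2,3)
    by (meson group.is_monoid monoid.l_one subsetD)
  ultimately show ?case by metis
next
  case (eng h1 h2)
  then show ?case using par_mult[OF assms(1,2)] by blast
qed

lemma propagate:
  fixes f :: "'a \<Rightarrow> complex" and M :: real
  assumes "group G" "S \<subseteq> carrier G" "par G S g b"
    and step: "\<And>s \<eta>. s \<in> S \<Longrightarrow> \<eta> > 0 \<Longrightarrow> \<exists>\<epsilon>>0. \<forall>y\<in>carrier G. \<forall>c. norm c = 1 \<longrightarrow>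
         Re (c * f y) \<ge> M - \<epsilon> \<longrightarrow> Re (- c * f (y \<otimes>\<^bsub>G\<^esub> s)) \<ge> M - \<eta>"
  shows "\<forall>\<eta>>0. \<exists>\<epsilon>>0. \<forall>x\<in>carrier G. \<forall>c. norm c = 1 \<longrightarrow>
         Re (c * f x) \<ge> M - \<epsilon> \<longrightarrow> Re ((if b then c else - c) * f (x \<otimes>\<^bsub>G\<^esub> g)) \<ge> M - \<eta>"
  using assms(3) proof induction
  case par_one
  show ?case
  proof (intro allI impI)
    fix \<eta> :: real assume "\<eta> > 0"
    then show "\<exists>\<epsilon>>0. \<forall>x\<in>carrier G. \<forall>c. norm c = 1 \<longrightarrow>
         Re (c * f x) \<ge> M - \<epsilon> \<longrightarrow> Re ((if True then c else - c) * f (x \<otimes>\<^bsub>G\<^esub> \<one>\<^bsub>G\<^esub>)) \<ge> M - \<eta>"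
      using assms(1) by (auto simp: group.is_monoid monoid.r_one)
  qed
next
  case (par_step g b s)
  show ?case
  proof (intro allI impI)
    fix \<eta> :: real assume "\<eta> > 0"
    obtain e1 where e1: "e1 > 0" "\<forall>y\<in>carrier G. \<forall>c. norm c = 1 \<longrightarrow>
         Re (c * f y) \<ge> M - e1 \<longrightarrow> Re (- c * f (y \<otimes>\<^bsub>G\<^esub> s)) \<ge> M - \<eta>"
      using step[OF par_step(2) \<open>\<eta> > 0\<close>] by blast
    obtain e where e: "e > 0" "\<forall>x\<in>carrier G. \<forall>c. norm c = 1 \<longrightarrow>
         Re (c * f x) \<ge> M - e \<longrightarrow> Re ((if b then c else - c) * f (x \<otimes>\<^bsub>G\<^esub> g)) \<ge> M - e1"
      using par_step(3) e1(1) by blast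
    have gc: "g \<in> carrier G" using par_carrier[OF assms(1,2) par_step(1)] .
    have sc: "s \<in> carrier G" using par_step(2) assms(2) by blast
    show "\<exists>\<epsilon>>0. \<forall>x\<in>carrier G. \<forall>c. norm c = 1 \<longrightarrow>
         Re (c * f x) \<ge> M - \<epsilon> \<longrightarrow> Re ((if \<not> b then c else - c) * f (x \<otimes>\<^bsub>G\<^esub> (g \<otimes>\<^bsub>G\<^esub> s))) \<ge> M - \<eta>"
    proof (intro exI[of _ e] conjI allI ballI impI)
      fix x c assume x: "x \<in> carrier G" and c: "norm (c::complex) = 1" and h: "Re (c * f x) \<ge> M - e"
      let ?c = "(if b then c else - c)"
      have 1: "Re (?c * f (x \<otimes>\<^bsub>G\<^esub> g)) \<ge> M - e1" using e(2) x c h by blast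
      have xg: "x \<otimes>\<^bsub>G\<^esub> g \<in> carrier G" using x gc assms(1) by (meson group.is_monoid monoid.m_closed)
      have "norm ?c = 1" using c by simp
      then have "Re (- ?c * f ((x \<otimes>\<^bsub>G\<^esub> g) \<otimes>\<^bsub>G\<^esub> s)) \<ge> M - \<eta>" using e1(2) xg 1 by blast
      moreover have "(x \<otimes>\<^bsub>G\<^esub> g) \<otimes>\<^bsub>G\<^esub> s = x \<otimes>\<^bsub>G\<^esub> (g \<otimes>\<^bsub>G\<^esub> s)"
        using x gc sc assms(1) by (meson group.is_monoid monoid.m_assoc)
      moreover have "- ?c = (if \<not> b then c else - c)" by simp
      ultimately show "Re ((if \<not> b then c else - c) * f (x \<otimes>\<^bsub>G\<^esub> (g \<otimes>\<^bsub>G\<^esub> s))) \<ge> M - \<eta>" by metis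
    qed (rule e(1))
  qed
qed


lemma step_lemma:
  fixes f :: "'a \<Rightarrow> complex" and M :: real
  assumes G: "group G" and pm: "prob_meas G \<mu>"
    and bound: "\<forall>x\<in>carrier G. norm (f x) \<le> M"
    and eq: "\<forall>x\<in>carrier G. conv_meas G f \<mu> x = - f x"
    and s: "s \<in> carrier G" "\<mu> s \<noteq> 0" and eta: "\<eta> > 0"
  shows "\<exists>\<epsilon>>0. \<forall>y\<in>carrier G. \<forall>c. norm c = 1 \<longrightarrow>
         Re (c * f y) \<ge> M - \<epsilon> \<longrightarrow> Re (- c * f (y \<otimes>\<^bsub>G\<^esub> s)) \<ge> M - \<eta>"
proof -
  have mu0: "\<And>h. h \<in> carrier G \<Longrightarrow> 0 \<le> \<mu> h" and mu1: "(\<mu> has_sum 1) (carrier G)"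
    using pm unfolding prob_meas_def by auto
  have mus: "\<mu> s > 0" using mu0[OF s(1)] s(2) by simp
  show ?thesis
  proof (intro exI[of _ "\<mu> s * \<eta>"] conjI allI ballI impI)
    show "\<mu> s * \<eta> > 0" using mus eta by simp
    fix y c assume y: "y \<in> carrier G" and c: "norm (c::complex) = 1"
      and h: "Re (c * f y) \<ge> M - \<mu> s * \<eta>"
    have yh: "\<And>h. h \<in> carrier G \<Longrightarrow> y \<otimes>\<^bsub>G\<^esub> h \<in> carrier G"
      using G y by (meson group.is_monoid monoid.m_closed)
    have "(\<lambda>h. \<mu> h * M) summable_on carrier G"
      using has_sum_cmult_left[OF mu1, of M] unfolding summable_on_def by blast
    then have "(\<lambda>h. norm (complex_of_real (\<mu> h) * f (y \<otimes>\<^bsub>G\<^esub> h))) summable_on carrier G"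
    proof (rule summable_on_comparison_test)
      fix h assume hc: "h \<in> carrier G"
      show "norm (complex_of_real (\<mu> h) * f (y \<otimes>\<^bsub>G\<^esub> h)) \<le> \<mu> h * M"
        using mu0[OF hc] bound yh[OF hc] by (simp add: norm_mult mult_left_mono)
    next
      fix h show "0 \<le> norm (complex_of_real (\<mu> h) * f (y \<otimes>\<^bsub>G\<^esub> h))" by (rule norm_ge_zero)
    qed
    then have "(\<lambda>h. complex_of_real (\<mu> h) * f (y \<otimes>\<^bsub>G\<^esub> h)) summable_on carrier G"
      by (rule abs_summable_summable)
    then have "((\<lambda>h. complex_of_real (\<mu> h) * f (y \<otimes>\<^bsub>G\<^esub> h)) has_sum conv_meas G f \<mu> y) (carrier G)"
      unfolding conv_meas_def by (rule has_sum_infsum)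
    moreover have "conv_meas G f \<mu> y = - f y" using eq y by blast
    ultimately have "((\<lambda>h. complex_of_real (\<mu> h) * f (y \<otimes>\<^bsub>G\<^esub> h)) has_sum (- f y)) (carrier G)"
      by simp
    then have "((\<lambda>h. (- c) * (complex_of_real (\<mu> h) * f (y \<otimes>\<^bsub>G\<^esub> h))) has_sum ((- c) * (- f y))) (carrier G)"
      by (rule has_sum_cmult_right)
    then have A0: "((\<lambda>h. Re ((- c) * (complex_of_real (\<mu> h) * f (y \<otimes>\<^bsub>G\<^esub> h)))) has_sum Re ((- c) * (- f y))) (carrier G)"
      by (rule has_sum_Re)
    have A: "((\<lambda>h. \<mu> h * Re (- c * f (y \<otimes>\<^bsub>G\<^esub> h))) has_sum Re (c * f y)) (carrier G)"
    proof -
      have "\<And>h. Re ((- c) * (complex_of_real (\<mu> h) * f (y \<otimes>\<^bsub>G\<^esub> h))) = \<mu> h * Re (- c * f (y \<otimes>\<^bsub>G\<^esub> h))"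
        by (simp add: algebra_simps)
      moreover have "Re ((- c) * (- f y)) = Re (c * f y)" by simp
      ultimately show ?thesis using A0 by simp
    qed
    have B: "((\<lambda>h. \<mu> h * M) has_sum M) (carrier G)"
      using has_sum_cmult_left[OF mu1, of M] by simp
    have C: "((\<lambda>h. \<mu> h * M - \<mu> h * Re (- c * f (y \<otimes>\<^bsub>G\<^esub> h))) has_sum (M - Re (c * f y))) (carrier G)"
    proof -
      have A': "((\<lambda>h. - (\<mu> h * Re (- c * f (y \<otimes>\<^bsub>G\<^esub> h)))) has_sum (- Re (c * f y))) (carrier G)"
        by (subst has_sum_uminus) (simp only: minus_minus A)
      show ?thesis using has_sum_add[OF B A'] by (simp only: diff_conv_add_uminus)
    qed
    have le: "\<And>h. h \<in> carrier G \<Longrightarrow> Re (- c * f (y \<otimes>\<^bsub>G\<^esub> h)) \<le> M"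
    proof -
      fix h assume hc: "h \<in> carrier G"
      have "Re (- c * f (y \<otimes>\<^bsub>G\<^esub> h)) \<le> norm (- c * f (y \<otimes>\<^bsub>G\<^esub> h))" by (rule complex_Re_le_cmod)
      also have "\<dots> = norm (f (y \<otimes>\<^bsub>G\<^esub> h))" using c by (simp add: norm_mult)
      moreover have "norm (f (y \<otimes>\<^bsub>G\<^esub> h)) \<le> M" using bound yh[OF hc] by blast
      ultimately show "Re (- c * f (y \<otimes>\<^bsub>G\<^esub> h)) \<le> M" by linarith
    qed
    have D: "((\<lambda>h. \<mu> h * M - \<mu> h * Re (- c * f (y \<otimes>\<^bsub>G\<^esub> h))) has_sum
        (\<mu> s * M - \<mu> s * Re (- c * f (y \<otimes>\<^bsub>G\<^esub> s)))) {s}"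
      by (rule has_sum_finiteI) simp_all
    have "\<mu> s * M - \<mu> s * Re (- c * f (y \<otimes>\<^bsub>G\<^esub> s)) \<le> M - Re (c * f y)"
    proof (rule has_sum_mono'[OF D C])
      show "{s} \<subseteq> carrier G" using s by simp
      fix h assume "h \<in> carrier G - {s}"
      then show "0 \<le> \<mu> h * M - \<mu> h * Re (- c * f (y \<otimes>\<^bsub>G\<^esub> h))"
      proof -
        have "h \<in> carrier G" using \<open>h \<in> carrier G - {s}\<close> by blast
        then have "0 \<le> \<mu> h * (M - Re (- c * f (y \<otimes>\<^bsub>G\<^esub> h)))"
          using mu0 le by simp
        then show ?thesis by (simp add: right_diff_distrib)
      qed
    qed
    then have "\<mu> s * (M - Re (- c * f (y \<otimes>\<^bsub>G\<^esub> s))) \<le> \<mu> s * \<eta>"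
      using h by (simp add: right_diff_distrib)
    then show "Re (- c * f (y \<otimes>\<^bsub>G\<^esub> s)) \<ge> M - \<eta>" using mus by simp
  qed
qed


theorem theoremB:
  fixes G :: "('a, 'b) monoid_scheme" and \<mu> :: "'a \<Rightarrow> real" and f :: "'a \<Rightarrow> complex"
  assumes "group G" and "countable (carrier G)"
    and "prob_meas G \<mu>" and "symmetric_meas G \<mu>" and "generating_meas G \<mu>"
    and "linf G f" and "\<exists>x\<in>carrier G. f x \<noteq> 0"
    and "\<forall>x\<in>carrier G. conv_meas G f \<mu> x = - f x"
  shows "\<exists>chi. unitary_character G chi \<and> (\<forall>h\<in>supp_meas G \<mu>. chi h = -1)
           \<and> (\<forall>x\<in>carrier G. conv_meas G chi \<mu> x = - chi x)
           \<and> (\<forall>F. linf G F \<and> (\<forall>x\<in>carrier G. conv_meas G F \<mu> x = - F x) \<longrightarrow>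
                 (\<exists>f1. linf G f1 \<and> (\<forall>x\<in>carrier G. conv_meas G f1 \<mu> x = f1 x)
                       \<and> (\<forall>x\<in>carrier G. F x = f1 x * chi x)))"
proof -
  note G = assms(1)
  define S where "S = supp_meas G \<mu>"
  have SC: "S \<subseteq> carrier G" unfolding S_def supp_meas_def by blast
  have mu0: "\<And>h. h \<in> carrier G \<Longrightarrow> 0 \<le> \<mu> h" and mu1: "(\<mu> has_sum 1) (carrier G)"
    using assms(3) unfolding prob_meas_def by auto
  have Sinv: "\<And>s. s \<in> S \<Longrightarrow> inv\<^bsub>G\<^esub> s \<in> S"
  proof -
    fix s assume s: "s \<in> S"
    then have sc: "s \<in> carrier G" and "\<mu> s \<noteq> 0" unfolding S_def supp_meas_def by auto
    moreover have "\<mu> s = \<mu> (inv\<^bsub>G\<^esub> s)" using assms(4) sc unfolding symmetric_meas_def by blast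
    moreover have "inv\<^bsub>G\<^esub> s \<in> carrier G" using G sc by (rule group.inv_closed)
    ultimately show "inv\<^bsub>G\<^esub> s \<in> S" unfolding S_def supp_meas_def by auto
  qed
  have allpar: "\<And>x. x \<in> carrier G \<Longrightarrow> \<exists>b. par G S x b"
    using generate_par[OF G SC Sinv] assms(5) unfolding generating_meas_def S_def by blast
  define M where "M = Sup ((\<lambda>x. norm (f x)) ` carrier G)"
  obtain B where B: "\<forall>x\<in>carrier G. norm (f x) \<le> B" using assms(6) unfolding linf_def by blast
  have bdd: "bdd_above ((\<lambda>x. norm (f x)) ` carrier G)" using B by (auto intro: bdd_aboveI2)
  have bound: "\<forall>x\<in>carrier G. norm (f x) \<le> M"
    unfolding M_def using bdd by (auto intro: cSup_upper)
  obtain x0 where x0: "x0 \<in> carrier G" "f x0 \<noteq> 0" using assms(7) by blast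
  have Mpos: "M > 0" using bound x0 by (metis norm_le_zero_iff not_le order.strict_trans1 zero_less_norm_iff)
  have stepS: "\<And>s \<eta>. s \<in> S \<Longrightarrow> \<eta> > 0 \<Longrightarrow> \<exists>\<epsilon>>0. \<forall>y\<in>carrier G. \<forall>c. norm c = 1 \<longrightarrow>
         Re (c * f y) \<ge> M - \<epsilon> \<longrightarrow> Re (- c * f (y \<otimes>\<^bsub>G\<^esub> s)) \<ge> M - \<eta>"
  proof -
    fix s \<eta> assume "s \<in> S" "(\<eta>::real) > 0"
    then show "\<exists>\<epsilon>>0. \<forall>y\<in>carrier G. \<forall>c. norm c = 1 \<longrightarrow>
         Re (c * f y) \<ge> M - \<epsilon> \<longrightarrow> Re (- c * f (y \<otimes>\<^bsub>G\<^esub> s)) \<ge> M - \<eta>"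
      using step_lemma[OF G assms(3) bound assms(8)] unfolding S_def supp_meas_def by blast
  qed
  have uniq: "\<And>g. par G S g True \<Longrightarrow> par G S g False \<Longrightarrow> False"
  proof -
    fix g assume p1: "par G S g True" and p2: "par G S g False"
    have hM: "M / 2 > 0" using Mpos by simp
    obtain e1 where e1: "e1 > 0" "\<forall>x\<in>carrier G. \<forall>c. norm c = 1 \<longrightarrow>
         Re (c * f x) \<ge> M - e1 \<longrightarrow> Re ((if True then c else - c) * f (x \<otimes>\<^bsub>G\<^esub> g)) \<ge> M - M / 2"
      using propagate[OF G SC p1 stepS] hM by blast
    obtain e2 where e2: "e2 > 0" "\<forall>x\<in>carrier G. \<forall>c. norm c = 1 \<longrightarrow>
         Re (c * f x) \<ge> M - e2 \<longrightarrow> Re ((if False then c else - c) * f (x \<otimes>\<^bsub>G\<^esub> g)) \<ge> M - M / 2"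
      using propagate[OF G SC p2 stepS] hM by blast
    define e where "e = min (min e1 e2) M"
    have e: "e > 0" "e \<le> e1" "e \<le> e2" "e \<le> M" using e1 e2 Mpos unfolding e_def by auto
    have "M - e < M" using e by simp
    then obtain t where "t \<in> (\<lambda>x. norm (f x)) ` carrier G" "M - e < t"
      using less_cSupD[of "(\<lambda>x. norm (f x)) ` carrier G" "M - e"] x0(1) unfolding M_def by blast
    then obtain x where x: "x \<in> carrier G" "M - e < norm (f x)" by blast
    have fx: "f x \<noteq> 0" using x(2) e(4) by auto
    define c where "c = cnj (f x) / complex_of_real (norm (f x))"
    have cn: "norm c = 1" using fx unfolding c_def by (simp add: norm_divide)
    have "c * f x = complex_of_real (norm (f x))"
    proof -
      have n: "complex_of_real (norm (f x)) \<noteq> 0" using fx by simp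
      have "cnj (f x) * f x = complex_of_real (norm (f x)) * complex_of_real (norm (f x))"
        using complex_norm_square[of "f x"] by (simp add: power2_eq_square mult.commute)
      then show ?thesis unfolding c_def using n by (simp add: divide_simps)
    qed
    then have "Re (c * f x) = norm (f x)" by simp
    then have r1: "Re (c * f x) \<ge> M - e1" and r2: "Re (c * f x) \<ge> M - e2" using x(2) e(2,3) by linarith+
    have a: "Re (c * f (x \<otimes>\<^bsub>G\<^esub> g)) \<ge> M - M / 2" using e1(2) x(1) cn r1 by auto
    have b: "Re (- c * f (x \<otimes>\<^bsub>G\<^esub> g)) \<ge> M - M / 2" using e2(2) x(1) cn r2 by auto
    have "Re (- c * f (x \<otimes>\<^bsub>G\<^esub> g)) = - Re (c * f (x \<otimes>\<^bsub>G\<^esub> g))" by simp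
    then show False using a b Mpos by linarith
  qed
  define chi :: "'a \<Rightarrow> complex" where "chi x = (if par G S x True then 1 else -1)" for x
  have chi_val: "\<And>x b. par G S x b \<Longrightarrow> chi x = (if b then 1 else -1)"
    unfolding chi_def using uniq by (metis (full_types))
  have chi_mult: "\<And>x y. x \<in> carrier G \<Longrightarrow> y \<in> carrier G \<Longrightarrow> chi (x \<otimes>\<^bsub>G\<^esub> y) = chi x * chi y"
  proof -
    fix x y assume "x \<in> carrier G" "y \<in> carrier G"
    then obtain b c where pb: "par G S x b" and pc: "par G S y c" using allpar by blast
    have "par G S (x \<otimes>\<^bsub>G\<^esub> y) (b = c)" using par_mult[OF G SC pb pc] .
    then show "chi (x \<otimes>\<^bsub>G\<^esub> y) = chi x * chi y"
      using chi_val[OF pb] chi_val[OF pc] chi_val by auto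
  qed
  have chi_norm: "\<And>x. norm (chi x) = 1" unfolding chi_def by simp
  have chi_sq: "\<And>x. chi x * chi x = 1" unfolding chi_def by simp
  have chi_S: "\<And>h. h \<in> S \<Longrightarrow> chi h = -1"
  proof -
    fix h assume h: "h \<in> S"
    have "par G S (\<one>\<^bsub>G\<^esub> \<otimes>\<^bsub>G\<^esub> h) False" using par_step[OF par_one h] by simp
    moreover have "\<one>\<^bsub>G\<^esub> \<otimes>\<^bsub>G\<^esub> h = h" using h SC G by (meson group.is_monoid monoid.l_one subsetD)
    ultimately show "chi h = -1" using chi_val by fastforce
  qed
  have key: "\<And>x h. x \<in> carrier G \<Longrightarrow> h \<in> carrier G \<Longrightarrow>
      complex_of_real (\<mu> h) * chi (x \<otimes>\<^bsub>G\<^esub> h) = - chi x * complex_of_real (\<mu> h)"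
  proof -
    fix x h assume x: "x \<in> carrier G" and h: "h \<in> carrier G"
    show "complex_of_real (\<mu> h) * chi (x \<otimes>\<^bsub>G\<^esub> h) = - chi x * complex_of_real (\<mu> h)"
    proof (cases "\<mu> h = 0")
      case True then show ?thesis by simp
    next
      case False
      then have "h \<in> S" using h unfolding S_def supp_meas_def by blast
      then show ?thesis using chi_mult[OF x h] chi_S by simp
    qed
  qed
  have muC: "infsum (\<lambda>h. complex_of_real (\<mu> h)) (carrier G) = 1"
    by (rule infsumI) (use has_sum_of_real[OF mu1, where 'a=complex] in simp)
  show ?thesis
  proof (rule exI[of _ chi], intro conjI allI ballI impI)
    show "unitary_character G chi" unfolding unitary_character_def using chi_norm chi_mult by blast
    show "\<And>h. h \<in> supp_meas G \<mu> \<Longrightarrow> chi h = -1" using chi_S unfolding S_def by blast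
    fix x assume x: "x \<in> carrier G"
    have "conv_meas G chi \<mu> x = infsum (\<lambda>h. - chi x * complex_of_real (\<mu> h)) (carrier G)"
      unfolding conv_meas_def by (rule infsum_cong) (rule key[OF x])
    also have "\<dots> = - chi x * infsum (\<lambda>h. complex_of_real (\<mu> h)) (carrier G)"
      by (rule infsum_cmult_right')
    finally show "conv_meas G chi \<mu> x = - chi x" using muC by simp
  next
    fix F assume F: "linf G F \<and> (\<forall>x\<in>carrier G. conv_meas G F \<mu> x = - F x)"
    show "\<exists>f1. linf G f1 \<and> (\<forall>x\<in>carrier G. conv_meas G f1 \<mu> x = f1 x)
                       \<and> (\<forall>x\<in>carrier G. F x = f1 x * chi x)"
    proof -
      have L: "linf G (\<lambda>x. F x * chi x)"
        using F unfolding linf_def by (simp add: norm_mult chi_norm)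
      have E: "\<forall>x\<in>carrier G. F x = F x * chi x * chi x" using chi_sq by (simp add: mult.assoc)
      have C: "\<forall>x\<in>carrier G. conv_meas G (\<lambda>x. F x * chi x) \<mu> x = F x * chi x"
      proof
      fix x assume x: "x \<in> carrier G"
      have "conv_meas G (\<lambda>x. F x * chi x) \<mu> x =
          infsum (\<lambda>h. - chi x * (complex_of_real (\<mu> h) * F (x \<otimes>\<^bsub>G\<^esub> h))) (carrier G)"
        unfolding conv_meas_def
      proof (rule infsum_cong)
        fix h assume h: "h \<in> carrier G"
        have "complex_of_real (\<mu> h) * (F (x \<otimes>\<^bsub>G\<^esub> h) * chi (x \<otimes>\<^bsub>G\<^esub> h)) =
            (complex_of_real (\<mu> h) * chi (x \<otimes>\<^bsub>G\<^esub> h)) * F (x \<otimes>\<^bsub>G\<^esub> h)" by (simp add: algebra_simps)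
        also have "\<dots> = - chi x * (complex_of_real (\<mu> h) * F (x \<otimes>\<^bsub>G\<^esub> h))"
          using key[OF x h] by (simp add: algebra_simps)
        finally show "complex_of_real (\<mu> h) * (F (x \<otimes>\<^bsub>G\<^esub> h) * chi (x \<otimes>\<^bsub>G\<^esub> h)) =
            - chi x * (complex_of_real (\<mu> h) * F (x \<otimes>\<^bsub>G\<^esub> h))" .
      qed
      also have "\<dots> = - chi x * conv_meas G F \<mu> x"
        unfolding conv_meas_def by (rule infsum_cmult_right')
      also have "\<dots> = F x * chi x" using F x by simp
      finally show "conv_meas G (\<lambda>x. F x * chi x) \<mu> x = F x * chi x" .
    qed
    show ?thesis using L C E by blast
    qed
  qed
qed

end
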